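(* Let $g\in A[z;\sigma]$, let $M=\xi(g)=(m_{ab})$ and put $d_{ab}=\deg m_{ab}$ for $a,b=1,\dots,n$. Then: (1) In each row and in each column of $\mathcal{D}(M)$ the entries different from $-\infty$ are pairwise different; in particular each non-trivial row of $\mathcal{D}(M)$ has a unique maximum. (2) For all $a,b=1,\dots,n$ we have $\xi(g^{(a)}e_b)=E_{aa}ME_{bb}=m_{ab}E_{ab}$ and $\deg(g^{(a)}e_b)=\mathcal{D}(M)_{ab}$. Furthermore $\deg g^{(a)}=\max_{1\le b\le n}\mathcal{D}(M)_{ab}$ for all $a=1,\dots,n$, and $\deg g=\max_{1\le a\le n}\deg g^{(a)}=\max_{1\le a,b\le n}\mathcal{D}(M)_{ab}$. (3) $g$ is semi-reduced if and only if $M$ is semi-reduced. (4) For $a\in\mathrm{Supp}(M)$ let $\delta_a:=\max\{d_{ab}\mid 1\le b\le n\}$ and $b_a:=\max\{b\mid d_{ab}=\delta_a\}$. Then $\max_{1\le b\le n}\mathcal{D}(M)_{ab}=\mathcal{D}(M)_{a,b_a}$. Consequently, $M$ is semi-reduced if and only if the indices $b_a$, $a\in\mathrm{Supp}(M)$, are pairwise different.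
   Context: Let $\mathbb{F}$ be a finite field with $q$ elements and $n\ge 2$ a divisor of $q-1$. Let $A=\mathbb{F}\times\cdots\times\mathbb{F}$ ($n$ copies), with elements written $[a_1,\dots,a_n]$; $\mathbb{F}$ embeds diagonally in $A$. Let $e_i\in A$ be the element with $1$ in position $i$ and $0$ elsewhere. Let $\sigma:A\to A$, $\sigma([a_1,\dots,a_n])=[a_n,a_1,\dots,a_{n-1}]$, so $\sigma(e_i)=e_{i+1}$ for $i<n$ and $\sigma(e_n)=e_1$. The skew polynomial ring $A[z;\sigma]$ consists of the polynomials $\sum_{\nu=0}^N z^\nu a_\nu$ ($a_\nu\in A$, coefficients always written on the right) with coefficientwise addition and multiplication determined by associativity, distributivity and the rule $az=z\sigma(a)$ for $a\in A$. The degree of a nonzero $\sum z^\nu a_\nu$ is the largest $\nu$ with $a_\nu\ne0$; $\deg 0=-\infty$. For $g\in A[z;\sigma]$ and $a=1,\dots,n$ the $a$-th component of $g$ is $g^{(a)}:=e_ag$; the support is $T_g=\{a\mid g^{(a)}\neq 0\}$. Each component has the form $g^{(a)}=\sum_{j=0}^{N_a} z^j c_{a,j}e_{(a+j-1 \bmod n)+1}$ with $c_{a,j}\in\mathbb{F}$, so its leading coefficient is an $\mathbb{F}$-multiple of a primitive idempotent $e_i$. $g$ is called semi-reduced if the leading coefficients of the components $g^{(a)}$, $a\in T_g$, lie in pairwise different ideals $\langle e_i\rangle$ of $A$. Let $\mathcal{M}=\{(m_{ab})\in\mathbb{F}[t]^{n\times n}\mid m_{ab}(0)=0\text{ for }1\le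 b<a\le n\}$. Every $g\in A[z;\sigma]$ can be uniquely written as $g=\sum_{l=0}^N z^{nl}\sum_{i=0}^{n-1}z^i[c^l_{i1},\dots,c^l_{in}]$ with $c^l_{ij}\in\mathbb{F}$; the map $\xi:A[z;\sigma]\to\mathcal{M}$ sends such $g$ to the matrix $(m_{ab})$ with $m_{ab}=\sum_l t^l c^l_{b-a,b}$ if $b\ge a$ and $m_{ab}=\sum_l t^{l+1}c^l_{n+b-a,b}$ if $b<a$; $\xi$ is a ring isomorphism. $E_{ab}\in\mathbb{F}^{n\times n}$ denotes the matrix with $1$ at position $(a,b)$ and $0$ elsewhere. For $M=(m_{ab})\in\mathcal{M}$ with $d_{ab}=\deg m_{ab}$ (with $\deg 0=-\infty$), the degree matrix $\mathcal{D}(M)$ is the $n\times n$ matrix with entries $\mathcal{D}(M)_{ab}=nd_{ab}-a+b\in\mathbb{N}_0\cup\{-\infty\}$. A row of $\mathcal{D}(M)$ is trivial if all its entries are $-\infty$. $M$ is called semi-reduced if the maxima of the non-trivial rows of $\mathcal{D}(M)$ lie in pairwise different columns. $\mathrm{Supp}(M)$ is the set of indices of the nonzero rows of $M$. *)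

theory Defs
  imports "HOL-Computational_Algebra.Polynomial" "HOL-Library.Option_ord"
begin

text \<open>Elements of A = F^n are functions nat => F, positions 1..n
  (value 0 outside). A skew polynomial sum z^nu a_nu is a function
  g :: nat => nat => F with g nu = a_nu. The degree value -infinity is None
  (None is the least element via Option_ord).\<close>

definition skpoly :: "nat \<Rightarrow> (nat \<Rightarrow> nat \<Rightarrow> 'a::zero) \<Rightarrow> bool" where
  "skpoly n g \<longleftrightarrow> (\<forall>\<nu> i. i \<notin> {1..n} \<longrightarrow> g \<nu> i = 0) \<and> finite {\<nu>. \<exists>i. g \<nu> i \<noteq> 0}"

definition Amult :: "(nat \<Rightarrow> 'a::times) \<Rightarrow> (nat \<Rightarrow> 'a) \<Rightarrow> nat \<Rightarrow> 'a" where
  "Amult x y = (\<lambda>i. x i * y i)"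

definition eA :: "nat \<Rightarrow> nat \<Rightarrow> 'a::{zero,one}" where
  "eA i = (\<lambda>j. if j = i then 1 else 0)"

definition Aideal :: "nat \<Rightarrow> (nat \<Rightarrow> 'a::comm_ring_1) \<Rightarrow> (nat \<Rightarrow> 'a) set" where
  "Aideal n x = {Amult x r | r. \<forall>i. i \<notin> {1..n} \<longrightarrow> r i = 0}"

text \<open>sigma([a_1,...,a_n]) = [a_n,a_1,...,a_{n-1}]\<close>
definition sigmaA :: "nat \<Rightarrow> (nat \<Rightarrow> 'a::zero) \<Rightarrow> nat \<Rightarrow> 'a" where
  "sigmaA n x = (\<lambda>i. if 1 \<le> i \<and> i \<le> n then x ((i + n - 2) mod n + 1) else 0)"

text \<open>(sum z^mu f_mu)(sum z^nu g_nu) = sum z^(mu+nu) sigma^nu(f_mu) g_nu\<close>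
definition skmult :: "nat \<Rightarrow> (nat \<Rightarrow> nat \<Rightarrow> 'a::comm_ring_1) \<Rightarrow> (nat \<Rightarrow> nat \<Rightarrow> 'a)
    \<Rightarrow> nat \<Rightarrow> nat \<Rightarrow> 'a" where
  "skmult n f g = (\<lambda>k i. \<Sum>\<nu>\<le>k. ((sigmaA n ^^ \<nu>) (f (k - \<nu>))) i * g \<nu> i)"

definition skconst :: "(nat \<Rightarrow> 'a::zero) \<Rightarrow> nat \<Rightarrow> nat \<Rightarrow> 'a" where
  "skconst c = (\<lambda>\<nu>. if \<nu> = 0 then c else (\<lambda>_. 0))"

definition skdeg :: "(nat \<Rightarrow> nat \<Rightarrow> 'a::zero) \<Rightarrow> nat option" where
  "skdeg g = (if \<forall>\<nu> i. g \<nu> i = 0 then None else Some (Max {\<nu>. \<exists>i. g \<nu> i \<noteq> 0}))"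

definition component :: "nat \<Rightarrow> nat \<Rightarrow> (nat \<Rightarrow> nat \<Rightarrow> 'a::comm_ring_1) \<Rightarrow> nat \<Rightarrow> nat \<Rightarrow> 'a" where
  "component n a g = skmult n (skconst (eA a)) g"

definition skzero :: "nat \<Rightarrow> nat \<Rightarrow> 'a::zero" where
  "skzero = (\<lambda>_ _. 0)"

definition supp_sk :: "nat \<Rightarrow> (nat \<Rightarrow> nat \<Rightarrow> 'a::comm_ring_1) \<Rightarrow> nat set" where
  "supp_sk n g = {a \<in> {1..n}. component n a g \<noteq> skzero}"

definition sklc :: "(nat \<Rightarrow> nat \<Rightarrow> 'a::zero) \<Rightarrow> nat \<Rightarrow> 'a" where
  "sklc g = g (the (skdeg g))"

definition semi_reduced_sk :: "nat \<Rightarrow> (nat \<Rightarrow> nat \<Rightarrow> 'a::comm_ring_1) \<Rightarrow> bool" where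
  "semi_reduced_sk n g \<longleftrightarrow>
     (\<exists>\<iota>. (\<forall>a \<in> supp_sk n g. \<iota> a \<in> {1..n} \<and> sklc (component n a g) \<in> Aideal n (eA (\<iota> a)))
          \<and> inj_on \<iota> (supp_sk n g))"

text \<open>Matrices n x n over F[t], indices 1..n (0 outside).\<close>
definition xi :: "nat \<Rightarrow> (nat \<Rightarrow> nat \<Rightarrow> 'a::zero) \<Rightarrow> nat \<Rightarrow> nat \<Rightarrow> 'a poly" where
  "xi n g = (\<lambda>a b. if a \<in> {1..n} \<and> b \<in> {1..n} then
      Abs_poly (\<lambda>l. if a \<le> b then g (n * l + (b - a)) b
                    else if l = 0 then 0 else g (n * (l - 1) + (n + b - a)) b)
      else 0)"

definition matmul :: "nat \<Rightarrow> (nat \<Rightarrow> nat \<Rightarrow> 'a::comm_semiring_0) \<Rightarrow> (nat \<Rightarrow> nat \<Rightarrow> 'a)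
    \<Rightarrow> nat \<Rightarrow> nat \<Rightarrow> 'a" where
  "matmul n P Q = (\<lambda>i j. \<Sum>k\<in>{1..n}. P i k * Q k j)"

definition Emat :: "nat \<Rightarrow> nat \<Rightarrow> nat \<Rightarrow> nat \<Rightarrow> 'a::{zero,one}" where
  "Emat a b = (\<lambda>i j. if i = a \<and> j = b then 1 else 0)"

definition pdeg :: "'a::zero poly \<Rightarrow> nat option" where
  "pdeg p = (if p = 0 then None else Some (degree p))"

definition Dmat :: "nat \<Rightarrow> (nat \<Rightarrow> nat \<Rightarrow> 'a::zero poly) \<Rightarrow> nat \<Rightarrow> nat \<Rightarrow> nat option" where
  "Dmat n M a b = (if M a b = 0 then None
                   else Some (nat (int n * int (degree (M a b)) - int a + int b)))"

definition nontrivial_row :: "nat \<Rightarrow> (nat \<Rightarrow> nat \<Rightarrow> 'a::zero poly) \<Rightarrow> nat \<Rightarrow> bool" where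
  "nontrivial_row n M a \<longleftrightarrow> (\<exists>b\<in>{1..n}. Dmat n M a b \<noteq> None)"

definition row_max :: "nat \<Rightarrow> (nat \<Rightarrow> nat \<Rightarrow> 'a::zero poly) \<Rightarrow> nat \<Rightarrow> nat option" where
  "row_max n M a = Max ((\<lambda>b. Dmat n M a b) ` {1..n})"

definition semi_reduced_mat :: "nat \<Rightarrow> (nat \<Rightarrow> nat \<Rightarrow> 'a::zero poly) \<Rightarrow> bool" where
  "semi_reduced_mat n M \<longleftrightarrow>
     (\<exists>\<iota>. (\<forall>a \<in> {1..n}. nontrivial_row n M a \<longrightarrow>
              \<iota> a \<in> {1..n} \<and> Dmat n M a (\<iota> a) = row_max n M a)
          \<and> inj_on \<iota> {a \<in> {1..n}. nontrivial_row n M a})"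

definition Supp :: "nat \<Rightarrow> (nat \<Rightarrow> nat \<Rightarrow> 'a::zero poly) \<Rightarrow> nat set" where
  "Supp n M = {a \<in> {1..n}. \<exists>b \<in> {1..n}. M a b \<noteq> 0}"

definition delta_row :: "nat \<Rightarrow> (nat \<Rightarrow> nat \<Rightarrow> 'a::zero poly) \<Rightarrow> nat \<Rightarrow> nat option" where
  "delta_row n M a = Max ((\<lambda>b. pdeg (M a b)) ` {1..n})"

definition b_row :: "nat \<Rightarrow> (nat \<Rightarrow> nat \<Rightarrow> 'a::zero poly) \<Rightarrow> nat \<Rightarrow> nat" where
  "b_row n M a = Max {b \<in> {1..n}. pdeg (M a b) = delta_row n M a}"

end

theory Submission
  imports Defs "HOL-Number_Theory.Cong"
begin


lemma sigma_zero: "(sigmaA n ^^ k) (\<lambda>_. 0) = (\<lambda>_. 0::'a::zero)"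
  by (induction k) (auto simp: sigmaA_def)

lemma sigma_eA:
  assumes "1 \<le> c" "c \<le> n"
  shows "sigmaA n (eA c) = (eA (c mod n + 1) :: nat \<Rightarrow> 'a::{zero,one})"
proof
  fix i
  show "sigmaA n (eA c) i = (eA (c mod n + 1) :: nat \<Rightarrow> 'a) i"
  proof (cases "1 \<le> i \<and> i \<le> n")
    case True
    show ?thesis
    proof (cases "i = 1")
      case True
      have "(i + n - 2) mod n = n - 1" using True assms by simp
      moreover have "c mod n = 0 \<longleftrightarrow> c = n" using assms
        by (metis le_neq_implies_less mod_less mod_self not_one_le_zero)
      ultimately show ?thesis using True assms by (auto simp: sigmaA_def eA_def)
    next
      case False
      have "i + n - 2 = (i - 2) + n" using False \<open>1 \<le> i \<and> i \<le> n\<close> by simp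
      then have "(i + n - 2) mod n = (i - 2) mod n" by simp
      also have "\<dots> = i - 2" using False \<open>1 \<le> i \<and> i \<le> n\<close> by (intro mod_less) arith
      finally have "(i + n - 2) mod n = i - 2" .
      moreover have "c mod n + 1 = i \<longleftrightarrow> i - 2 + 1 = c"
        using False \<open>1 \<le> i \<and> i \<le> n\<close> assms
        by (cases "c = n") auto
      ultimately show ?thesis using \<open>1 \<le> i \<and> i \<le> n\<close> False
        by (auto simp: sigmaA_def eA_def)
    qed
  next
    case False
    have "c mod n < n" using assms by simp
    then have "i \<noteq> c mod n + 1" using False by auto
    then show ?thesis using False by (auto simp: sigmaA_def eA_def)
  qed
qed

lemma sigma_pow_eA:
  assumes "1 \<le> a" "a \<le> n"
  shows "(sigmaA n ^^ k) (eA a) = (eA ((a - 1 + k) mod n + 1) :: nat \<Rightarrow> 'a::{zero,one})"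
proof (induction k)
  case 0
  then show ?case using assms by simp
next
  case (Suc k)
  have n0: "n > 0" using assms by simp
  have "(sigmaA n ^^ Suc k) (eA a) = sigmaA n (eA ((a - 1 + k) mod n + 1) :: nat \<Rightarrow> 'a)"
    using Suc by simp
  also have "\<dots> = eA (((a - 1 + k) mod n + 1) mod n + 1)"
    by (rule sigma_eA) (use n0 in \<open>auto simp: Suc_le_eq\<close>)
  also have "((a - 1 + k) mod n + 1) mod n = (a - 1 + Suc k) mod n"
    by (simp add: mod_Suc_eq)
  finally show ?case .
qed

lemma component_eq:
  assumes "1 \<le> a" "a \<le> n"
  shows "component n a g k i = (if i = (a - 1 + k) mod n + 1 then g k i else (0::'a::comm_ring_1))"
proof -
  have "component n a g k i = (\<Sum>\<nu>\<in>{..k}. (if \<nu> = k then ((sigmaA n ^^ k) (eA a)) i * g k i else 0))"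
    unfolding component_def skmult_def skconst_def
    by (rule sum.cong) (auto simp: sigma_zero)
  also have "\<dots> = ((sigmaA n ^^ k) (eA a)) i * g k i" by simp
  also have "\<dots> = (eA ((a - 1 + k) mod n + 1) :: nat \<Rightarrow> 'a) i * g k i"
    by (simp only: sigma_pow_eA[OF assms])
  finally show ?thesis by (simp add: eA_def)
qed

lemma H_eq:
  "skmult n f (skconst (eA b)) k i = f k i * (eA b i :: 'a::comm_ring_1)"
proof -
  have "skmult n f (skconst (eA b)) k i = (\<Sum>\<nu>\<in>{..k}. (if \<nu> = 0 then f k i * eA b i else 0))"
    unfolding skmult_def skconst_def
    by (rule sum.cong) auto
  then show ?thesis by simp
qed

lemma K2:
  fixes a a' k n :: nat
  assumes "a \<in> {1..n}" "a' \<in> {1..n}" "(a - 1 + k) mod n = (a' - 1 + k) mod n"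
  shows "a = a'"
proof -
  have "[a - 1 + k = a' - 1 + k] (mod n)" using assms(3) by (simp add: cong_def)
  then have "[a - 1 = a' - 1] (mod n)" by (simp add: cong_add_rcancel_nat)
  then have "(a - 1) mod n = (a' - 1) mod n" by (simp add: cong_def)
  moreover have "a - 1 < n" "a' - 1 < n" using assms(1,2) by auto
  ultimately show ?thesis using assms(1,2) by auto
qed

definition kap :: "nat \<Rightarrow> nat \<Rightarrow> nat \<Rightarrow> nat \<Rightarrow> nat" where
  "kap n a b l = (if a \<le> b then n * l + (b - a) else n * (l - 1) + (n + b - a))"

lemma K1:
  assumes "a \<in> {1..n}" "b \<in> {1..n}" "b < a \<Longrightarrow> l \<ge> 1"
  shows "(a - 1 + kap n a b l) mod n + 1 = b"
proof -
  have e: "a - 1 + kap n a b l = (b - 1) + n * l"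
  proof (cases "a \<le> b")
    case True
    then show ?thesis using assms by (auto simp: kap_def)
  next
    case False
    then obtain l' where l: "l = Suc l'" using assms by (cases l) auto
    show ?thesis using assms False l by (auto simp: kap_def)
  qed
  have "(a - 1 + kap n a b l) mod n = ((b - 1) + n * l) mod n" by (simp only: e)
  also have "\<dots> = (b - 1) mod n" by (rule mod_mult_self2)
  also have "\<dots> = b - 1" using assms by auto
  finally show ?thesis using assms by simp
qed

lemma K3:
  assumes "a \<in> {1..n}" "b \<in> {1..n}" "(a - 1 + k) mod n + 1 = b"
  shows "\<exists>l. (b < a \<longrightarrow> l \<ge> 1) \<and> k = kap n a b l"
proof -
  define q where "q = (a - 1 + k) div n"
  have m: "(a - 1 + k) mod n = b - 1" using assms(3) by simp
  have e: "a - 1 + k = n * q + (b - 1)"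
    using m mult_div_mod_eq[of n "a - 1 + k"] unfolding q_def by linarith
  show ?thesis
  proof (cases "a \<le> b")
    case True
    then show ?thesis using e assms by (auto simp: kap_def intro!: exI[of _ q])
  next
    case False
    then obtain q' where q: "q = Suc q'" using e assms by (cases q) auto
    then show ?thesis using e assms False by (auto simp: kap_def intro!: exI[of _ q])
  qed
qed

lemma kap_mono:
  assumes "n \<ge> 1" "l \<le> l'" "b < a \<Longrightarrow> l \<ge> 1"
  shows "kap n a b l \<le> kap n a b l'"
proof (cases "a \<le> b")
  case True
  have "n * l + (b - a) \<le> n * l' + (b - a)" using mult_le_mono2[OF assms(2)] by (rule add_le_mono1)
  then show ?thesis using True by (simp add: kap_def)
next
  case False
  have "n * (l - 1) + (n + b - a) \<le> n * (l' - 1) + (n + b - a)"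
    using mult_le_mono2[of "l - 1" "l' - 1" n] assms(2) by (intro add_le_mono1) (simp add: diff_le_mono)
  then show ?thesis using False by (simp add: kap_def)
qed

lemma kap_int:
  assumes "a \<in> {1..n}" "b \<in> {1..n}" "b < a \<Longrightarrow> l \<ge> 1"
  shows "int (kap n a b l) = int n * int l - int a + int b"
proof (cases "a \<le> b")
  case True
  then show ?thesis by (simp add: kap_def of_nat_diff)
next
  case False
  then obtain l' where l: "l = Suc l'" using assms by (cases l) auto
  then show ?thesis using False assms by (simp add: kap_def of_nat_diff algebra_simps)
qed

definition optMax :: "nat set \<Rightarrow> nat option" where
  "optMax S = (if S = {} then None else Some (Max S))"

lemma optMax_le:
  assumes "finite S"
  shows "optMax S \<le> x \<longleftrightarrow> (\<forall>k\<in>S. Some k \<le> x)"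
proof (cases "S = {}")
  case False
  then show ?thesis using assms unfolding optMax_def
    by (cases x) (auto simp: Max_le_iff)
qed (simp add: optMax_def)

lemma eq_by_ub:
  fixes p q :: "'b::linorder"
  assumes "\<And>x. p \<le> x \<longleftrightarrow> q \<le> x"
  shows "p = q"
  using assms[of p] assms[of q] by auto

lemma optMax_Union:
  assumes "finite B" "B \<noteq> {}" "\<And>b. b \<in> B \<Longrightarrow> finite (S b)"
  shows "optMax (\<Union>b\<in>B. S b) = Max ((\<lambda>b. optMax (S b)) ` B)"
proof (rule eq_by_ub)
  fix x
  show "optMax (\<Union>b\<in>B. S b) \<le> x \<longleftrightarrow> Max ((\<lambda>b. optMax (S b)) ` B) \<le> x"
    using assms by (simp add: optMax_le Max_le_iff)
qed

lemma Max_Max: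
  fixes h :: "'c \<Rightarrow> 'd \<Rightarrow> 'b::linorder"
  assumes "finite A" "A \<noteq> {}" "finite B" "B \<noteq> {}"
  shows "Max ((\<lambda>a. Max (h a ` B)) ` A) = Max ((\<lambda>(a, b). h a b) ` (A \<times> B))"
proof (rule eq_by_ub)
  fix x
  show "Max ((\<lambda>a. Max (h a ` B)) ` A) \<le> x \<longleftrightarrow> Max ((\<lambda>(a, b). h a b) ` (A \<times> B)) \<le> x"
    using assms by (simp add: Max_le_iff)
qed

lemma skdeg_optMax: "skdeg f = optMax {k. \<exists>i. f k i \<noteq> 0}"
  unfolding skdeg_def optMax_def by auto


lemma kap_ge:
  assumes "n \<ge> 1" "a \<in> {1..n}" "b \<in> {1..n}" "b < a \<Longrightarrow> l \<ge> 1"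
  shows "l \<le> kap n a b l"
proof (cases "a \<le> b")
  case True
  have "l \<le> n * l" using assms(1) by simp
  moreover have "kap n a b l = n * l + (b - a)" by (simp only: kap_def if_P[OF True])
  ultimately show ?thesis by linarith
next
  case False
  then obtain l' where l: "l = Suc l'" using assms by (cases l) auto
  have "l' \<le> n * l'" using assms(1) by simp
  moreover have "kap n a b l = n * l' + (n + b - a)" using l False by (simp add: kap_def)
  moreover have "a \<le> n" "1 \<le> b" using assms by auto
  ultimately show ?thesis using l False by linarith
qed

locale skp =
  fixes n :: nat and g :: "nat \<Rightarrow> nat \<Rightarrow> 'a::field"
  assumes n1: "n \<ge> 1" and sk: "skpoly n g"
begin

lemma g_out: "i \<notin> {1..n} \<Longrightarrow> g k i = 0"
  using sk by (simp add: skpoly_def)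

lemma g_fin: "finite {k. \<exists>i. g k i \<noteq> 0}"
  using sk by (simp add: skpoly_def)

lemma g_bound: "\<exists>N. \<forall>k>N. \<forall>i. g k i = 0"
proof -
  obtain N where "{k. \<exists>i. g k i \<noteq> 0} \<subseteq> {..<N}" using finite_nat_bounded[OF g_fin] by blast
  then show ?thesis by (intro exI[of _ N]) force
qed

lemma coeffM:
  assumes "a \<in> {1..n}" "b \<in> {1..n}"
  shows "coeff (xi n g a b) l = (if b < a \<and> l = 0 then 0 else g (kap n a b l) b)"
proof -
  have F: "(\<lambda>l. if a \<le> b then g (n * l + (b - a)) b
                    else if l = 0 then 0 else g (n * (l - 1) + (n + b - a)) b)
       = (\<lambda>l. if b < a \<and> l = 0 then 0 else g (kap n a b l) b)"
    by (auto simp: kap_def fun_eq_iff)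
  have X: "xi n g a b = Abs_poly (\<lambda>l. if b < a \<and> l = 0 then 0 else g (kap n a b l) b)"
    unfolding xi_def using assms F by simp
  obtain N where N: "\<forall>k>N. \<forall>i. g k i = 0" using g_bound by blast
  have "coeff (Abs_poly (\<lambda>l. if b < a \<and> l = 0 then 0 else g (kap n a b l) b))
        = (\<lambda>l. if b < a \<and> l = 0 then 0 else g (kap n a b l) b)"
  proof (rule coeff_Abs_poly)
    fix i assume "N < i"
    show "(if b < a \<and> i = 0 then 0 else g (kap n a b i) b) = 0"
    proof (cases "b < a \<and> i = 0")
      case False
      then have "i \<le> kap n a b i" using kap_ge[OF n1 assms] by auto
      then show ?thesis using N \<open>N < i\<close> False by auto
    qed simp
  qed
  then show ?thesis using X by simp
qed

lemma compH:
  assumes "a \<in> {1..n}" "b \<in> {1..n}"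
  shows "skmult n (component n a g) (skconst (eA b)) k i
         = (if i = b \<and> (a - 1 + k) mod n + 1 = b then g k b else 0)"
proof -
  have "skmult n (component n a g) (skconst (eA b)) k i = component n a g k i * eA b i"
    by (rule H_eq)
  then show ?thesis using assms by (auto simp: component_eq eA_def)
qed

lemma H_zero:
  assumes "a \<in> {1..n}" "b \<in> {1..n}" "xi n g a b = 0"
  shows "skmult n (component n a g) (skconst (eA b)) k i = 0"
proof (rule ccontr)
  assume "skmult n (component n a g) (skconst (eA b)) k i \<noteq> 0"
  then have i: "i = b" and m: "(a - 1 + k) mod n + 1 = b" and gk: "g k b \<noteq> 0"
    using compH[OF assms(1,2)] by (auto split: if_splits)
  obtain l where l: "b < a \<longrightarrow> l \<ge> 1" "k = kap n a b l" using K3[OF assms(1,2) m] by blast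
  have "coeff (xi n g a b) l = g k b" using coeffM[OF assms(1,2)] l by auto
  then show False using gk assms(3) by simp
qed

lemma deg_pos:
  assumes "a \<in> {1..n}" "b \<in> {1..n}" "xi n g a b \<noteq> 0" "b < a"
  shows "degree (xi n g a b) \<ge> 1"
proof (rule ccontr)
  assume "\<not> degree (xi n g a b) \<ge> 1"
  then have "degree (xi n g a b) = 0" by simp
  then have "coeff (xi n g a b) 0 \<noteq> 0" using leading_coeff_neq_0[OF assms(3)] by simp
  then show False using coeffM[OF assms(1,2)] assms(4) by simp
qed

lemma Dmat_eq:
  assumes "a \<in> {1..n}" "b \<in> {1..n}"
  shows "Dmat n (xi n g) a b = (if xi n g a b = 0 then None
                                else Some (kap n a b (degree (xi n g a b))))"
proof (cases "xi n g a b = 0")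
  case False
  have "int (kap n a b (degree (xi n g a b))) = int n * int (degree (xi n g a b)) - int a + int b"
    using kap_int[OF assms] deg_pos[OF assms False] by auto
  then have "nat (int n * int (degree (xi n g a b)) - int a + int b) = kap n a b (degree (xi n g a b))"
    by linarith
  then show ?thesis using False by (simp add: Dmat_def)
qed (simp add: Dmat_def)

lemma skdeg_H:
  assumes "a \<in> {1..n}" "b \<in> {1..n}"
  shows "skdeg (skmult n (component n a g) (skconst (eA b))) = Dmat n (xi n g) a b"
proof (cases "xi n g a b = 0")
  case True
  then show ?thesis using H_zero[OF assms True] Dmat_eq[OF assms] by (simp add: skdeg_def)
next
  case False
  define d where "d = degree (xi n g a b)"
  define S where "S = {k. \<exists>i. skmult n (component n a g) (skconst (eA b)) k i \<noteq> 0}"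
  have dv: "b < a \<longrightarrow> d \<ge> 1" using deg_pos[OF assms False] d_def by auto
  have S_sub: "S \<subseteq> {k. \<exists>i. g k i \<noteq> 0}" unfolding S_def using compH[OF assms]
    by (auto split: if_splits)
  then have fS: "finite S" using g_fin finite_subset by blast
  have "kap n a b d \<in> S"
  proof -
    have "coeff (xi n g a b) d \<noteq> 0" using leading_coeff_neq_0[OF False] d_def by simp
    then have "g (kap n a b d) b \<noteq> 0" using coeffM[OF assms] dv by (auto split: if_splits)
    moreover have "(a - 1 + kap n a b d) mod n + 1 = b" using K1[OF assms] dv by auto
    ultimately show ?thesis unfolding S_def using compH[OF assms] by (intro CollectI exI[of _ b]) simp
  qed
  moreover have "\<forall>k\<in>S. k \<le> kap n a b d"
  proof
    fix k assume "k \<in> S"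
    then obtain i where "skmult n (component n a g) (skconst (eA b)) k i \<noteq> 0" unfolding S_def by blast
    then have m: "(a - 1 + k) mod n + 1 = b" and gk: "g k b \<noteq> 0"
      using compH[OF assms] by (auto split: if_splits)
    obtain l where l: "b < a \<longrightarrow> l \<ge> 1" "k = kap n a b l" using K3[OF assms m] by blast
    have "coeff (xi n g a b) l = g k b" using coeffM[OF assms] l by auto
    then have "l \<le> d" using gk le_degree d_def by metis
    then show "k \<le> kap n a b d" using kap_mono[OF n1] l by auto
  qed
  ultimately have "Max S = kap n a b d" using fS by (intro Max_eqI) auto
  moreover have "S \<noteq> {}" using \<open>kap n a b d \<in> S\<close> by auto
  ultimately show ?thesis using Dmat_eq[OF assms] False d_def
    by (simp add: skdeg_optMax optMax_def S_def[symmetric])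
qed

end



context skp begin
lemma Dmat_Some:
  assumes "a \<in> {1..n}" "b \<in> {1..n}" "Dmat n (xi n g) a b = Some k"
  shows "(a - 1 + k) mod n + 1 = b"
proof -
  have nz: "xi n g a b \<noteq> 0" and k: "k = kap n a b (degree (xi n g a b))"
    using assms(3) Dmat_eq[OF assms(1,2)] by (auto split: if_splits)
  show ?thesis using K1[OF assms(1,2)] deg_pos[OF assms(1,2) nz] k by auto
qed

lemma comp_fin: "finite {k. \<exists>i. component n a g k i \<noteq> 0}"
proof (cases "a \<in> {1..n}")
  case True
  have "{k. \<exists>i. component n a g k i \<noteq> 0} \<subseteq> {k. \<exists>i. g k i \<noteq> 0}"
    using True by (auto simp: component_eq split: if_splits)
  then show ?thesis using g_fin finite_subset by blast
next
  case False
  have "{k. \<exists>i. component n a g k i \<noteq> 0} \<subseteq> {k. \<exists>i. g k i \<noteq> 0}"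
    unfolding component_def skmult_def skconst_def
  proof (clarify)
    fix k i assume "(\<Sum>\<nu>\<le>k. (sigmaA n ^^ \<nu>) (if k - \<nu> = 0 then eA a else (\<lambda>_. 0)) i * g \<nu> i) \<noteq> 0"
    then obtain \<nu> where "\<nu> \<le> k" "(sigmaA n ^^ \<nu>) (if k - \<nu> = 0 then eA a else (\<lambda>_. 0)) i * g \<nu> i \<noteq> 0"
      by (meson atMost_iff sum.neutral)
    then have "\<nu> = k" "g \<nu> i \<noteq> 0" by (auto simp: sigma_zero split: if_splits)
    then show "\<exists>i. g k i \<noteq> 0" by blast
  qed
  then show ?thesis using g_fin finite_subset by blast
qed

lemma skdeg_comp:
  assumes "a \<in> {1..n}"
  shows "skdeg (component n a g) = row_max n (xi n g) a"
proof -
  let ?H = "\<lambda>b. skmult n (component n a g) (skconst (eA b))"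
  have ce: "\<And>k i. component n a g k i = (if i = (a - 1 + k) mod n + 1 then g k i else 0)"
    using assms by (intro component_eq) auto
  have U: "{k. \<exists>i. component n a g k i \<noteq> 0} = (\<Union>b\<in>{1..n}. {k. \<exists>i. ?H b k i \<noteq> 0})"
  proof (intro set_eqI iffI)
    fix k assume "k \<in> {k. \<exists>i. component n a g k i \<noteq> 0}"
    then obtain i where i: "component n a g k i \<noteq> 0" by blast
    then have gi: "g k i \<noteq> 0" and ii: "i = (a - 1 + k) mod n + 1"
      unfolding ce by (auto split: if_splits)
    then have iin: "i \<in> {1..n}" using g_out by blast
    have "?H i k i = g k i" using compH[OF assms iin, of k i] ii by simp
    then show "k \<in> (\<Union>b\<in>{1..n}. {k. \<exists>i. ?H b k i \<noteq> 0})"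
      using gi by (intro UN_I[OF iin] CollectI exI[of _ i]) simp
  next
    fix k assume "k \<in> (\<Union>b\<in>{1..n}. {k. \<exists>i. ?H b k i \<noteq> 0})"
    then obtain b i where b: "b \<in> {1..n}" "?H b k i \<noteq> 0" by blast
    then have "i = b" "(a - 1 + k) mod n + 1 = b" "g k b \<noteq> 0" using compH[OF assms b(1), of k i]
      by (auto split: if_splits)
    then have "component n a g k b \<noteq> 0" by (simp add: ce)
    then show "k \<in> {k. \<exists>i. component n a g k i \<noteq> 0}" by blast
  qed
  have fin: "finite {k. \<exists>i. ?H b k i \<noteq> 0}" if "b \<in> {1..n}" for b
  proof -
    have "{k. \<exists>i. ?H b k i \<noteq> 0} \<subseteq> {k. \<exists>i. g k i \<noteq> 0}"
    proof
      fix k assume "k \<in> {k. \<exists>i. ?H b k i \<noteq> 0}"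
      then obtain i where "?H b k i \<noteq> 0" by blast
      then have "g k b \<noteq> 0" using compH[OF assms that, of k i] by (auto split: if_splits)
      then show "k \<in> {k. \<exists>i. g k i \<noteq> 0}" by blast
    qed
    then show ?thesis using g_fin finite_subset by blast
  qed
  have "skdeg (component n a g) = optMax (\<Union>b\<in>{1..n}. {k. \<exists>i. ?H b k i \<noteq> 0})"
    unfolding skdeg_optMax U ..
  also have "\<dots> = Max ((\<lambda>b. optMax {k. \<exists>i. ?H b k i \<noteq> 0}) ` {1..n})"
    using n1 fin by (intro optMax_Union) auto
  also have "\<dots> = Max ((\<lambda>b. Dmat n (xi n g) a b) ` {1..n})"
  proof (intro arg_cong[where f = Max] image_cong refl)
    fix b assume "b \<in> {1..n}"
    then show "optMax {k. \<exists>i. ?H b k i \<noteq> 0} = Dmat n (xi n g) a b"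
      using skdeg_H[OF assms, of b] by (simp only: skdeg_optMax)
  qed
  finally show ?thesis by (simp only: row_max_def)
qed

lemma surj_a:
  assumes "i \<in> {1..n}"
  shows "\<exists>a\<in>{1..n}. (a - 1 + k) mod n + 1 = i"
proof -
  let ?f = "\<lambda>a. (a - 1 + k) mod n + 1"
  have inj: "inj_on ?f {1..n}"
  proof (rule inj_onI)
    fix x y assume xy: "x \<in> {1..n}" "y \<in> {1..n}" "?f x = ?f y"
    then have "(x - 1 + k) mod n = (y - 1 + k) mod n" by simp
    then show "x = y" using K2[OF xy(1,2)] by blast
  qed
  have sub: "?f ` {1..n} \<subseteq> {1..n}"
  proof
    fix y assume "y \<in> ?f ` {1..n}"
    then obtain x where "y = ?f x" by blast
    moreover have "(x - 1 + k) mod n < n" using n1 by simp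
    ultimately show "y \<in> {1..n}" by simp
  qed
  have "card (?f ` {1..n}) = card {1..n::nat}" using card_image[OF inj] .
  then have "?f ` {1..n} = {1..n}" using sub by (intro card_subset_eq) auto
  then have "i \<in> ?f ` {1..n}" using assms by simp
  then obtain a where "a \<in> {1..n}" "i = ?f a" by (rule imageE)
  then show ?thesis by (intro bexI[of _ a]) simp_all
qed

lemma skdeg_g: "skdeg g = Max ((\<lambda>a. skdeg (component n a g)) ` {1..n})"
proof -
  have U: "{k. \<exists>i. g k i \<noteq> 0} = (\<Union>a\<in>{1..n}. {k. \<exists>i. component n a g k i \<noteq> 0})"
  proof (intro set_eqI iffI)
    fix k assume "k \<in> {k. \<exists>i. g k i \<noteq> 0}"
    then obtain i where i: "g k i \<noteq> 0" by blast
    then have "i \<in> {1..n}" using g_out by blast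
    then obtain a where a: "a \<in> {1..n}" "(a - 1 + k) mod n + 1 = i" using surj_a[of i k] by (metis (no_types))
    then show "k \<in> (\<Union>a\<in>{1..n}. {k. \<exists>i. component n a g k i \<noteq> 0})"
    proof (intro UN_I[OF a(1)] CollectI exI[of _ i])
      have "component n a g k i = (if i = (a - 1 + k) mod n + 1 then g k i else 0)"
        using a(1) by (intro component_eq) auto
      then show "component n a g k i \<noteq> 0" using a(2) i by simp
    qed
  next
    fix k assume "k \<in> (\<Union>a\<in>{1..n}. {k. \<exists>i. component n a g k i \<noteq> 0})"
    then obtain a where a1: "a \<in> {1..n}" and "k \<in> {k. \<exists>i. component n a g k i \<noteq> 0}" by (rule UN_E)
    then obtain i where a2: "component n a g k i \<noteq> 0" by blast
    note a = a1 a2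
    have "component n a g k i = (if i = (a - 1 + k) mod n + 1 then g k i else 0)"
      using a(1) by (intro component_eq) auto
    then have "g k i \<noteq> 0" using a(2) by (auto split: if_splits)
    then show "k \<in> {k. \<exists>i. g k i \<noteq> 0}" by blast
  qed
  show ?thesis unfolding skdeg_optMax U using n1 comp_fin by (intro optMax_Union) auto
qed

end




lemma matmul_E:
  fixes M :: "nat \<Rightarrow> nat \<Rightarrow> 'b::comm_semiring_1"
  assumes "a \<in> {1..n}" "b \<in> {1..n}"
  shows "matmul n (Emat a a) (matmul n M (Emat b b)) = (\<lambda>i j. if i = a \<and> j = b then M a b else 0)"
    and "(\<lambda>i j. M a b * Emat a b i j) = (\<lambda>i j. if i = a \<and> j = b then M a b else 0)"
proof -
  have inner: "matmul n M (Emat b b) k j = (if j = b then M k b else 0)" for k j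
  proof -
    have "matmul n M (Emat b b) k j = (\<Sum>k'\<in>{1..n}. if k' = b then (if j = b then M k b else 0) else 0)"
      unfolding matmul_def Emat_def by (rule sum.cong) auto
    also have "\<dots> = (if j = b then M k b else 0)" using assms(2) by simp
    finally show ?thesis .
  qed
  show "matmul n (Emat a a) (matmul n M (Emat b b)) = (\<lambda>i j. if i = a \<and> j = b then M a b else 0)"
  proof (intro ext)
    fix i j
    have "matmul n (Emat a a) (matmul n M (Emat b b)) i j
        = (\<Sum>k\<in>{1..n}. Emat a a i k * (if j = b then M k b else 0))"
      unfolding matmul_def[of n "Emat a a"] inner by simp
    also have "\<dots> = (\<Sum>k\<in>{1..n}. if k = a then (if i = a \<and> j = b then M a b else 0) else 0)"
      by (rule sum.cong) (auto simp: Emat_def)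
    also have "\<dots> = (if i = a \<and> j = b then M a b else 0)" using assms(1) by simp
    finally show "matmul n (Emat a a) (matmul n M (Emat b b)) i j = (if i = a \<and> j = b then M a b else 0)" .
  qed
  show "(\<lambda>i j. M a b * Emat a b i j) = (\<lambda>i j. if i = a \<and> j = b then M a b else 0)"
    by (auto simp: Emat_def fun_eq_iff)
qed

lemma row_max_attained:
  assumes "n \<ge> 1"
  shows "\<exists>b\<in>{1..n}. Dmat n M a b = row_max n M a"
proof -
  have "row_max n M a \<in> (\<lambda>b. Dmat n M a b) ` {1..n}"
    unfolding row_max_def using assms by (intro Max_in) auto
  then show ?thesis by auto
qed

lemma row_max_None:
  assumes "n \<ge> 1"
  shows "row_max n M a = None \<longleftrightarrow> \<not> nontrivial_row n M a"
proof
  assume r: "row_max n M a = None"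
  show "\<not> nontrivial_row n M a"
  proof
    assume "nontrivial_row n M a"
    then obtain b where b: "b \<in> {1..n}" "Dmat n M a b \<noteq> None" by (auto simp: nontrivial_row_def)
    have "Dmat n M a b \<le> row_max n M a" unfolding row_max_def using b(1) by (intro Max_ge) auto
    then show False using r b(2) by (cases "Dmat n M a b") auto
  qed
next
  assume "\<not> nontrivial_row n M a"
  then have "\<forall>b\<in>{1..n}. Dmat n M a b = None" by (auto simp: nontrivial_row_def)
  then have "(\<lambda>b. Dmat n M a b) ` {1..n} = {None}" using assms by auto
  then show "row_max n M a = None" by (simp add: row_max_def)
qed

lemma Supp_nt: "Supp n M = {a \<in> {1..n}. nontrivial_row n M a}"
  by (auto simp: Supp_def nontrivial_row_def Dmat_def)

lemma iota_equiv:
  assumes "\<forall>a\<in>S. \<exists>!b. b \<in> B \<and> P a b" "\<forall>a\<in>S. f a \<in> B \<and> P a (f a)"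
  shows "(\<exists>\<iota>. (\<forall>a\<in>S. \<iota> a \<in> B \<and> P a (\<iota> a)) \<and> inj_on \<iota> S) \<longleftrightarrow> inj_on f S"
proof
  assume "\<exists>\<iota>. (\<forall>a\<in>S. \<iota> a \<in> B \<and> P a (\<iota> a)) \<and> inj_on \<iota> S"
  then obtain \<iota> where i: "\<forall>a\<in>S. \<iota> a \<in> B \<and> P a (\<iota> a)" "inj_on \<iota> S" by blast
  have "\<forall>a\<in>S. \<iota> a = f a" using assms i(1) by metis
  then show "inj_on f S" using i(2) inj_on_cong by metis
next
  assume "inj_on f S"
  then show "\<exists>\<iota>. (\<forall>a\<in>S. \<iota> a \<in> B \<and> P a (\<iota> a)) \<and> inj_on \<iota> S" using assms(2) by blast
qed

context skp begin

lemma skpoly_H: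
  assumes "a \<in> {1..n}" "b \<in> {1..n}"
  shows "skpoly n (skmult n (component n a g) (skconst (eA b)))"
proof -
  let ?H = "skmult n (component n a g) (skconst (eA b))"
  have "{k. \<exists>i. ?H k i \<noteq> 0} \<subseteq> {k. \<exists>i. g k i \<noteq> 0}"
  proof
    fix k assume "k \<in> {k. \<exists>i. ?H k i \<noteq> 0}"
    then obtain i where "?H k i \<noteq> 0" by blast
    then have "g k b \<noteq> 0" using compH[OF assms, of k i] by (auto split: if_splits)
    then show "k \<in> {k. \<exists>i. g k i \<noteq> 0}" by blast
  qed
  then have "finite {k. \<exists>i. ?H k i \<noteq> 0}" using g_fin finite_subset by blast
  moreover have "\<forall>\<nu> i. i \<notin> {1..n} \<longrightarrow> ?H \<nu> i = 0"
    using assms compH[OF assms] by auto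
  ultimately show ?thesis by (simp add: skpoly_def)
qed

lemma skp_H:
  assumes "a \<in> {1..n}" "b \<in> {1..n}"
  shows "skp n (skmult n (component n a g) (skconst (eA b)))"
  using n1 skpoly_H[OF assms] by (simp add: skp_def)

lemma xi_H:
  assumes "a \<in> {1..n}" "b \<in> {1..n}"
  shows "xi n (skmult n (component n a g) (skconst (eA b))) = (\<lambda>i j. if i = a \<and> j = b then xi n g a b else 0)"
proof (intro ext)
  fix i j
  let ?H = "skmult n (component n a g) (skconst (eA b))"
  show "xi n ?H i j = (if i = a \<and> j = b then xi n g a b else 0)"
  proof (cases "i \<in> {1..n} \<and> j \<in> {1..n}")
    case False
    then show ?thesis using assms by (auto simp: xi_def)
  next
    case True
    then have ij: "i \<in> {1..n}" "j \<in> {1..n}" by auto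
    show ?thesis
    proof (rule poly_eqI)
      fix l
      have L: "coeff (xi n ?H i j) l = (if j < i \<and> l = 0 then 0 else ?H (kap n i j l) j)"
        using skp.coeffM[OF skp_H[OF assms] ij] .
      show "coeff (xi n ?H i j) l = coeff (if i = a \<and> j = b then xi n g a b else 0) l"
      proof (cases "j < i \<and> l = 0")
        case True
        then show ?thesis using L coeffM[OF assms, of l] by auto
      next
        case False
        then have v: "j < i \<Longrightarrow> l \<ge> 1" by auto
        have k1: "(i - 1 + kap n i j l) mod n + 1 = j" using K1[OF ij v] .
        have Hv: "?H (kap n i j l) j = (if j = b \<and> (a - 1 + kap n i j l) mod n + 1 = b then g (kap n i j l) b else 0)"
          using compH[OF assms] by simp
        show ?thesis
        proof (cases "i = a \<and> j = b")
          case True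
          then show ?thesis using L Hv k1 False coeffM[OF assms, of l] by auto
        next
          case ne: False
          have "?H (kap n i j l) j = 0"
          proof (cases "j = b")
            case jb: True
            then have "i \<noteq> a" using ne by auto
            have "(a - 1 + kap n i j l) mod n + 1 \<noteq> b"
            proof
              assume "(a - 1 + kap n i j l) mod n + 1 = b"
              then have "(a - 1 + kap n i j l) mod n = (i - 1 + kap n i j l) mod n" using k1 jb by simp
              then show False using K2[OF assms(1) ij(1)] \<open>i \<noteq> a\<close> by auto
            qed
            then show ?thesis using Hv by simp
          qed (use Hv in simp)
          then show ?thesis using L ne False by auto
        qed
      qed
    qed
  qed
qed

end




context skp begin

lemma uniq:
  assumes "a \<in> {1..n}" "nontrivial_row n (xi n g) a"
  shows "\<exists>!b. b \<in> {1..n} \<and> Dmat n (xi n g) a b = row_max n (xi n g) a"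
proof -
  obtain k where k: "row_max n (xi n g) a = Some k"
    using row_max_None[OF n1] assms(2) by (cases "row_max n (xi n g) a") auto
  obtain b where b: "b \<in> {1..n}" "Dmat n (xi n g) a b = row_max n (xi n g) a"
    using row_max_attained[OF n1] by blast
  show ?thesis
  proof (rule ex1I[of _ b])
    show "b \<in> {1..n} \<and> Dmat n (xi n g) a b = row_max n (xi n g) a" using b by simp
  next
    fix b' assume b': "b' \<in> {1..n} \<and> Dmat n (xi n g) a b' = row_max n (xi n g) a"
    have "(a - 1 + k) mod n + 1 = b'" using Dmat_Some[OF assms(1)] b' k by auto
    moreover have "(a - 1 + k) mod n + 1 = b" using Dmat_Some[OF assms(1)] b k by auto
    ultimately show "b' = b" by simp
  qed
qed

lemma supp_sk_eq: "supp_sk n g = Supp n (xi n g)"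
proof -
  have "component n a g \<noteq> skzero \<longleftrightarrow> nontrivial_row n (xi n g) a" if "a \<in> {1..n}" for a
  proof -
    have "component n a g \<noteq> skzero \<longleftrightarrow> skdeg (component n a g) \<noteq> None"
      by (auto simp: skdeg_def skzero_def fun_eq_iff)
    also have "\<dots> \<longleftrightarrow> nontrivial_row n (xi n g) a"
      by (simp only: skdeg_comp[OF that] row_max_None[OF n1] not_not)
    finally show ?thesis .
  qed
  then show ?thesis unfolding supp_sk_def Supp_nt by auto
qed

lemma lc_ideal:
  assumes "a \<in> {1..n}" "nontrivial_row n (xi n g) a" "j \<in> {1..n}"
  shows "sklc (component n a g) \<in> Aideal n (eA j) \<longleftrightarrow> Dmat n (xi n g) a j = row_max n (xi n g) a"
proof -
  obtain k where k: "row_max n (xi n g) a = Some k"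
    using row_max_None[OF n1] assms(2) by (cases "row_max n (xi n g) a") auto
  have sd: "skdeg (component n a g) = Some k" using skdeg_comp[OF assms(1)] k by simp
  obtain bs where bs: "bs \<in> {1..n}" "Dmat n (xi n g) a bs = Some k"
    using row_max_attained[OF n1, of "xi n g" a] k by auto
  have ms: "(a - 1 + k) mod n + 1 = bs" using Dmat_Some[OF assms(1) bs] .
  have ce: "component n a g k i = (if i = bs then g k i else 0)" for i
    using component_eq[of a n g k i] assms(1) ms by auto
  have lc: "sklc (component n a g) = component n a g k" using sd by (simp add: sklc_def)
  have "k \<in> {k. \<exists>i. component n a g k i \<noteq> 0}"
  proof -
    let ?S = "{k. \<exists>i. component n a g k i \<noteq> 0}"
    have "?S \<noteq> {}" "Max ?S = k" using sd by (auto simp: skdeg_optMax optMax_def split: if_splits)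
    then show ?thesis using Max_in[OF comp_fin] by metis
  qed
  then obtain i where "component n a g k i \<noteq> 0" by blast
  then have gk: "g k bs \<noteq> 0" using ce by (auto split: if_splits)
  have "component n a g k \<in> Aideal n (eA j) \<longleftrightarrow> j = bs"
  proof
    assume "component n a g k \<in> Aideal n (eA j)"
    then obtain r where r: "component n a g k = Amult (eA j) r" by (auto simp: Aideal_def)
    have "component n a g k bs = eA j bs * r bs" using r by (simp add: Amult_def)
    then have "eA j bs \<noteq> (0::'a)" using ce gk by auto
    then show "j = bs" by (auto simp: eA_def split: if_splits)
  next
    assume jb: "j = bs"
    have "component n a g k = Amult (eA j) (component n a g k)"
      using jb by (auto simp: Amult_def eA_def ce fun_eq_iff)
    moreover have "\<forall>i. i \<notin> {1..n} \<longrightarrow> component n a g k i = 0" using ce bs(1) by auto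
    ultimately show "component n a g k \<in> Aideal n (eA j)" unfolding Aideal_def by blast
  qed
  also have "\<dots> \<longleftrightarrow> Dmat n (xi n g) a j = row_max n (xi n g) a"
  proof
    assume "j = bs" then show "Dmat n (xi n g) a j = row_max n (xi n g) a" using bs k by simp
  next
    assume "Dmat n (xi n g) a j = row_max n (xi n g) a"
    then have "(a - 1 + k) mod n + 1 = j" using Dmat_Some[OF assms(1) assms(3)] k by simp
    then show "j = bs" using ms by simp
  qed
  finally show ?thesis using lc by simp
qed

lemma b_row_prop:
  assumes "a \<in> Supp n (xi n g)"
  shows "b_row n (xi n g) a \<in> {1..n} \<and> Dmat n (xi n g) a (b_row n (xi n g) a) = row_max n (xi n g) a"
proof -
  let ?M = "xi n g"
  let ?P = "\<lambda>b. pdeg (?M a b)"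
  have a: "a \<in> {1..n}" using assms by (simp add: Supp_def)
  obtain b0 where b0: "b0 \<in> {1..n}" "?M a b0 \<noteq> 0" using assms by (auto simp: Supp_def)
  have "?P b0 \<le> delta_row n ?M a" unfolding delta_row_def using b0(1) by (intro Max_ge) auto
  then obtain d where d: "delta_row n ?M a = Some d"
    using b0(2) by (cases "delta_row n ?M a") (auto simp: pdeg_def)
  define T where "T = {b \<in> {1..n}. ?P b = delta_row n ?M a}"
  have "delta_row n ?M a \<in> ?P ` {1..n}" unfolding delta_row_def using n1 by (intro Max_in) auto
  then have Tne: "T \<noteq> {}" unfolding T_def by auto
  have fT: "finite T" unfolding T_def by simp
  have br_def': "b_row n ?M a = Max T" unfolding b_row_def T_def ..
  have brT: "b_row n ?M a \<in> T" using Max_in[OF fT Tne] br_def' by simp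
  define br where "br = b_row n ?M a"
  have br1: "br \<in> {1..n}" and Pbr: "?P br = Some d" using brT d unfolding br_def T_def by auto
  have Mbr: "?M a br \<noteq> 0" and dbr: "degree (?M a br) = d" using Pbr by (auto simp: pdeg_def split: if_splits)
  have Dbr: "Dmat n ?M a br = Some (kap n a br d)" using Dmat_eq[OF a br1] Mbr dbr by simp
  have vbr: "br < a \<Longrightarrow> d \<ge> 1" using deg_pos[OF a br1 Mbr] dbr by simp
  have ib: "int (kap n a br d) = int n * int d - int a + int br" using kap_int[OF a br1 vbr] .
  have le: "Dmat n ?M a b \<le> Dmat n ?M a br" if b: "b \<in> {1..n}" for b
  proof (cases "?M a b = 0")
    case True
    then show ?thesis by (simp add: Dmat_def)
  next
    case False
    define db where "db = degree (?M a b)"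
    have Db: "Dmat n ?M a b = Some (kap n a b db)" using Dmat_eq[OF a b] False db_def by simp
    have vb: "b < a \<Longrightarrow> db \<ge> 1" using deg_pos[OF a b False] db_def by simp
    have ibb: "int (kap n a b db) = int n * int db - int a + int b" using kap_int[OF a b vb] .
    have "?P b \<le> delta_row n ?M a" unfolding delta_row_def using b by (intro Max_ge) auto
    then have dbd: "db \<le> d" using d False db_def by (simp add: pdeg_def)
    have "int (kap n a b db) \<le> int (kap n a br d)"
    proof (cases "db = d")
      case True
      then have "b \<in> T" using False d unfolding T_def db_def using b by (simp add: pdeg_def)
      then have "b \<le> br" unfolding br_def br_def' using fT by (rule Max_ge[rotated])
      then show ?thesis using ibb ib True by simp
    next
      case False
      then have "Suc db \<le> d" using dbd by simp
      then have "n * Suc db \<le> n * d" by (rule mult_le_mono2)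
      then have "int n * int db + int n \<le> int n * int d"
        by (metis (mono_tags, opaque_lifting) mult_Suc_right add.commute of_nat_add of_nat_le_iff of_nat_mult)
      moreover have "b \<le> n" "1 \<le> br" using b br1 by auto
      ultimately show ?thesis using ibb ib by linarith
    qed
    then show ?thesis using Db Dbr by simp
  qed
  have "row_max n ?M a = Dmat n ?M a br"
    unfolding row_max_def using le br1 by (intro Max_eqI) auto
  then show ?thesis using br1 unfolding br_def by simp
qed

end




theorem proposition3p10:
  fixes n :: nat and g :: "nat \<Rightarrow> nat \<Rightarrow> 'a::{field,finite}"
  assumes "n \<ge> 2" and "n dvd card (UNIV :: 'a set) - 1" and "skpoly n g"
  defines "M \<equiv> xi n g"
  shows
  \<comment> \<open>(1)\<close>
    "(\<forall>a\<in>{1..n}. \<forall>b\<in>{1..n}. \<forall>b'\<in>{1..n}. b \<noteq> b' \<longrightarrow> Dmat n M a b \<noteq> None \<longrightarrow>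
        Dmat n M a b \<noteq> Dmat n M a b')
   \<and> (\<forall>b\<in>{1..n}. \<forall>a\<in>{1..n}. \<forall>a'\<in>{1..n}. a \<noteq> a' \<longrightarrow> Dmat n M a b \<noteq> None \<longrightarrow>
        Dmat n M a b \<noteq> Dmat n M a' b)
   \<and> (\<forall>a\<in>{1..n}. nontrivial_row n M a \<longrightarrow>
        (\<exists>!b. b \<in> {1..n} \<and> Dmat n M a b = row_max n M a))
  \<comment> \<open>(2)\<close>
   \<and> (\<forall>a\<in>{1..n}. \<forall>b\<in>{1..n}.
        xi n (skmult n (component n a g) (skconst (eA b))) = matmul n (Emat a a) (matmul n M (Emat b b))
      \<and> matmul n (Emat a a) (matmul n M (Emat b b)) = (\<lambda>i j. M a b * Emat a b i j)
      \<and> skdeg (skmult n (component n a g) (skconst (eA b))) = Dmat n M a b)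
   \<and> (\<forall>a\<in>{1..n}. skdeg (component n a g) = row_max n M a)
   \<and> skdeg g = Max ((\<lambda>a. skdeg (component n a g)) ` {1..n})
   \<and> Max ((\<lambda>a. skdeg (component n a g)) ` {1..n}) = Max ((\<lambda>(a, b). Dmat n M a b) ` ({1..n} \<times> {1..n}))
  \<comment> \<open>(3)\<close>
   \<and> (semi_reduced_sk n g \<longleftrightarrow> semi_reduced_mat n M)
  \<comment> \<open>(4)\<close>
   \<and> (\<forall>a\<in>Supp n M. row_max n M a = Dmat n M a (b_row n M a))
   \<and> (semi_reduced_mat n M \<longleftrightarrow> inj_on (b_row n M) (Supp n M))"
proof -
  interpret skp n g using assms(1,3) by unfold_locales auto
  have n1: "n \<ge> 1" using assms(1) by simp
  have P1a: "\<forall>a\<in>{1..n}. \<forall>b\<in>{1..n}. \<forall>b'\<in>{1..n}. b \<noteq> b' \<longrightarrow> Dmat n M a b \<noteq> None \<longrightarrow>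
        Dmat n M a b \<noteq> Dmat n M a b'"
  proof (intro ballI impI)
    fix a b b' assume ab: "a \<in> {1..n}" "b \<in> {1..n}" "b' \<in> {1..n}" "b \<noteq> b'" "Dmat n M a b \<noteq> None"
    then obtain k where k: "Dmat n M a b = Some k" by auto
    show "Dmat n M a b \<noteq> Dmat n M a b'"
    proof
      assume e: "Dmat n M a b = Dmat n M a b'"
      have "(a - 1 + k) mod n + 1 = b" using Dmat_Some[OF ab(1,2)] k M_def by simp
      moreover have "(a - 1 + k) mod n + 1 = b'" using Dmat_Some[OF ab(1,3)] k e M_def by simp
      ultimately show False using ab(4) by simp
    qed
  qed
  have P1b: "\<forall>b\<in>{1..n}. \<forall>a\<in>{1..n}. \<forall>a'\<in>{1..n}. a \<noteq> a' \<longrightarrow> Dmat n M a b \<noteq> None \<longrightarrow>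
        Dmat n M a b \<noteq> Dmat n M a' b"
  proof (intro ballI impI)
    fix a a' b assume ab: "b \<in> {1..n}" "a \<in> {1..n}" "a' \<in> {1..n}" "a \<noteq> a'" "Dmat n M a b \<noteq> None"
    then obtain k where k: "Dmat n M a b = Some k" by auto
    show "Dmat n M a b \<noteq> Dmat n M a' b"
    proof
      assume e: "Dmat n M a b = Dmat n M a' b"
      have "(a - 1 + k) mod n + 1 = b" using Dmat_Some[OF ab(2,1)] k M_def by simp
      moreover have "(a' - 1 + k) mod n + 1 = b" using Dmat_Some[OF ab(3,1)] k e M_def by simp
      ultimately have "(a - 1 + k) mod n = (a' - 1 + k) mod n" by simp
      then show False using K2[OF ab(2,3)] ab(4) by simp
    qed
  qed
  have P1c: "\<forall>a\<in>{1..n}. nontrivial_row n M a \<longrightarrow>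
        (\<exists>!b. b \<in> {1..n} \<and> Dmat n M a b = row_max n M a)"
    using uniq M_def by simp
  have P2a: "\<forall>a\<in>{1..n}. \<forall>b\<in>{1..n}.
        xi n (skmult n (component n a g) (skconst (eA b))) = matmul n (Emat a a) (matmul n M (Emat b b))
      \<and> matmul n (Emat a a) (matmul n M (Emat b b)) = (\<lambda>i j. M a b * Emat a b i j)
      \<and> skdeg (skmult n (component n a g) (skconst (eA b))) = Dmat n M a b"
  proof (intro ballI)
    fix a b assume ab: "a \<in> {1..n}" "b \<in> {1..n}"
    have e1: "matmul n (Emat a a) (matmul n M (Emat b b)) = (\<lambda>i j. if i = a \<and> j = b then M a b else 0)"
      by (rule matmul_E(1)[OF ab])
    have e2: "(\<lambda>i j. M a b * Emat a b i j) = (\<lambda>i j. if i = a \<and> j = b then M a b else 0)"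
      by (rule matmul_E(2)[OF ab])
    show "xi n (skmult n (component n a g) (skconst (eA b))) = matmul n (Emat a a) (matmul n M (Emat b b))
      \<and> matmul n (Emat a a) (matmul n M (Emat b b)) = (\<lambda>i j. M a b * Emat a b i j)
      \<and> skdeg (skmult n (component n a g) (skconst (eA b))) = Dmat n M a b"
      using xi_H[OF ab] skdeg_H[OF ab] e1 e2 unfolding M_def by simp
  qed
  have P2b: "\<forall>a\<in>{1..n}. skdeg (component n a g) = row_max n M a"
    using skdeg_comp M_def by simp
  have P2c: "skdeg g = Max ((\<lambda>a. skdeg (component n a g)) ` {1..n})"
    by (rule skdeg_g)
  have P2d: "Max ((\<lambda>a. skdeg (component n a g)) ` {1..n}) = Max ((\<lambda>(a, b). Dmat n M a b) ` ({1..n} \<times> {1..n}))"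
  proof -
    have "Max ((\<lambda>a. skdeg (component n a g)) ` {1..n}) = Max ((\<lambda>a. Max ((\<lambda>b. Dmat n M a b) ` {1..n})) ` {1..n})"
      using P2b by (intro arg_cong[where f = Max] image_cong) (auto simp: row_max_def)
    also have "\<dots> = Max ((\<lambda>(a, b). Dmat n M a b) ` ({1..n} \<times> {1..n}))"
      using n1 by (intro Max_Max) auto
    finally show ?thesis .
  qed
  have BR: "\<forall>a\<in>Supp n M. b_row n M a \<in> {1..n} \<and> Dmat n M a (b_row n M a) = row_max n M a"
    using b_row_prop M_def by simp
  have SuppA: "\<And>a. a \<in> Supp n M \<Longrightarrow> a \<in> {1..n} \<and> nontrivial_row n M a"
    using Supp_nt by blast
  have U: "\<forall>a\<in>Supp n M. \<exists>!b. b \<in> {1..n} \<and> Dmat n M a b = row_max n M a"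
    using P1c SuppA by blast
  have P4b: "semi_reduced_mat n M \<longleftrightarrow> inj_on (b_row n M) (Supp n M)"
  proof -
    have "semi_reduced_mat n M \<longleftrightarrow>
      (\<exists>\<iota>. (\<forall>a\<in>Supp n M. \<iota> a \<in> {1..n} \<and> Dmat n M a (\<iota> a) = row_max n M a) \<and> inj_on \<iota> (Supp n M))"
      unfolding semi_reduced_mat_def Supp_nt by blast
    also have "\<dots> \<longleftrightarrow> inj_on (b_row n M) (Supp n M)"
      by (rule iota_equiv[OF U BR])
    finally show ?thesis .
  qed
  have P3: "semi_reduced_sk n g \<longleftrightarrow> inj_on (b_row n M) (Supp n M)"
  proof -
    have LC: "\<And>a j. a \<in> Supp n M \<Longrightarrow> j \<in> {1..n} \<Longrightarrow>
      sklc (component n a g) \<in> Aideal n (eA j) \<longleftrightarrow> Dmat n M a j = row_max n M a"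
      using lc_ideal SuppA M_def by blast
    have ss: "supp_sk n g = Supp n M" using supp_sk_eq M_def by simp
    have U': "\<forall>a\<in>Supp n M. \<exists>!b. b \<in> {1..n} \<and> sklc (component n a g) \<in> Aideal n (eA b)"
    proof
      fix a assume a: "a \<in> Supp n M"
      have "\<And>b. (b \<in> {1..n} \<and> sklc (component n a g) \<in> Aideal n (eA b))
          \<longleftrightarrow> (b \<in> {1..n} \<and> Dmat n M a b = row_max n M a)" using LC[OF a] by blast
      then show "\<exists>!b. b \<in> {1..n} \<and> sklc (component n a g) \<in> Aideal n (eA b)"
        using U a by simp
    qed
    have BR': "\<forall>a\<in>Supp n M. b_row n M a \<in> {1..n} \<and> sklc (component n a g) \<in> Aideal n (eA (b_row n M a))"
      using BR LC by blast
    show ?thesis unfolding semi_reduced_sk_def ss by (rule iota_equiv[OF U' BR'])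
  qed
  have P4a: "\<forall>a\<in>Supp n M. row_max n M a = Dmat n M a (b_row n M a)"
    using BR by simp
  show ?thesis using P1a P1b P1c P2a P2b P2c P2d P3 P4a P4b by simp
qed


end
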